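(* Let $\mathsf{A}$ be a finite set of $d \times d$ matrices over $\mathbb{C}$, and let $\mathsf{R} \subseteq \mathsf{A}$ be the set of all elements of $\mathsf{A}$ which have rank greater than or equal to two. If $\mathsf{A}$ does not satisfy the finiteness property, then $\mathsf{R}$ contains at least two elements, $\varrho(\mathsf{A})=\varrho(\mathsf{R})$, and $\mathsf{R}$ does not satisfy the finiteness property.
   Context: For a square matrix $A$, $\rho(A)$ denotes its ordinary spectral radius. For a nonempty bounded set $\mathsf{A}$ of $d\times d$ complex matrices, the joint spectral radius is \[\varrho(\mathsf{A})=\lim_{n \to \infty} \sup\left\{\left\|A_{i_n} \cdots A_{i_1}\right\|^{1/n} \colon A_{i_j} \in \mathsf{A}\right\},\] where $\|\cdot\|$ is any matrix norm (the limit exists and is independent of the norm). For $n\ge 1$ let $\mathsf{A}_n=\{A_{i_1}\cdots A_{i_n} \colon A_{i_j}\in\mathsf{A}\}$. A finite nonempty set $\mathsf{A}$ of square matrices is said to have the finiteness property if there exists an integer $N\geq 1$ such that $\varrho(\mathsf{A})=\max\{\rho(A)^{1/N} \colon A \in \mathsf{A}_N\}$. *)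

theory Defs
  imports "Jordan_Normal_Form.Spectral_Radius" "Jordan_Normal_Form.DL_Rank"
begin

text \<open>Frobenius norm of a complex matrix (any norm gives the same joint spectral radius).\<close>
definition mat_norm :: "complex mat \<Rightarrow> real" where
  "mat_norm M = sqrt (\<Sum>i<dim_row M. \<Sum>j<dim_col M. (cmod (M $$ (i,j)))\<^sup>2)"

fun products :: "nat \<Rightarrow> complex mat set \<Rightarrow> nat \<Rightarrow> complex mat set" where
  "products d A 0 = {1\<^sub>m d}"
| "products d A (Suc n) = {M * P | M P. M \<in> A \<and> P \<in> products d A n}"

definition jsr :: "nat \<Rightarrow> complex mat set \<Rightarrow> real" where
  "jsr d A = lim (\<lambda>n. Sup ((\<lambda>P. mat_norm P powr (1 / real n)) ` products d A n))"

definition finiteness_property :: "nat \<Rightarrow> complex mat set \<Rightarrow> bool" where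
  "finiteness_property d A \<longleftrightarrow>
     (\<exists>N\<ge>1. jsr d A = Max ((\<lambda>P. spectral_radius P powr (1 / real N)) ` products d A N))"

end

theory Submission
  imports Defs
begin
lemma cs_real:
  fixes a b :: "'a \<Rightarrow> real"
  shows "(\<Sum>i\<in>I. a i * b i)\<^sup>2 \<le> (\<Sum>i\<in>I. (a i)\<^sup>2) * (\<Sum>i\<in>I. (b i)\<^sup>2)"
proof -
  have 1: "(\<Sum>i\<in>I. a i * b i)\<^sup>2 = (\<Sum>i\<in>I. \<Sum>j\<in>I. (a i * b i) * (a j * b j))"
    unfolding power2_eq_square by (rule sum_product)
  have 2: "(\<Sum>i\<in>I. (a i)\<^sup>2) * (\<Sum>i\<in>I. (b i)\<^sup>2) = (\<Sum>i\<in>I. \<Sum>j\<in>I. (a i)\<^sup>2 * (b j)\<^sup>2)"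
    by (rule sum_product)
  have 3: "(\<Sum>i\<in>I. \<Sum>j\<in>I. (a i)\<^sup>2 * (b j)\<^sup>2) = (\<Sum>i\<in>I. \<Sum>j\<in>I. (a j)\<^sup>2 * (b i)\<^sup>2)"
    by (rule sum.swap)
  have 4: "(a i * b i) * (a j * b j) \<le> ((a i)\<^sup>2 * (b j)\<^sup>2 + (a j)\<^sup>2 * (b i)\<^sup>2) / 2" for i j
  proof -
    have "0 \<le> (a i * b j - a j * b i)\<^sup>2" by (rule zero_le_power2)
    also have "\<dots> = (a i)\<^sup>2 * (b j)\<^sup>2 + (a j)\<^sup>2 * (b i)\<^sup>2 - 2 * ((a i * b i) * (a j * b j))"
      by (simp add: power2_eq_square algebra_simps)
    finally show ?thesis by simp
  qed
  have "(\<Sum>i\<in>I. a i * b i)\<^sup>2 \<le> (\<Sum>i\<in>I. \<Sum>j\<in>I. ((a i)\<^sup>2 * (b j)\<^sup>2 + (a j)\<^sup>2 * (b i)\<^sup>2) / 2)"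
    unfolding 1 by (intro sum_mono 4)
  also have "\<dots> = ((\<Sum>i\<in>I. \<Sum>j\<in>I. (a i)\<^sup>2 * (b j)\<^sup>2) + (\<Sum>i\<in>I. \<Sum>j\<in>I. (a j)\<^sup>2 * (b i)\<^sup>2)) / 2"
    by (simp only: sum_divide_distrib sum.distrib add_divide_distrib)
  also have "\<dots> = (\<Sum>i\<in>I. (a i)\<^sup>2) * (\<Sum>i\<in>I. (b i)\<^sup>2)"
    unfolding 2 3[symmetric] by simp
  finally show ?thesis .
qed

lemma cs_cmod:
  fixes f g :: "'a \<Rightarrow> complex"
  shows "(cmod (\<Sum>l\<in>I. f l * g l))\<^sup>2 \<le> (\<Sum>l\<in>I. (cmod (f l))\<^sup>2) * (\<Sum>l\<in>I. (cmod (g l))\<^sup>2)"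
proof -
  have "cmod (\<Sum>l\<in>I. f l * g l) \<le> (\<Sum>l\<in>I. cmod (f l) * cmod (g l))"
    by (metis (no_types, lifting) norm_mult norm_sum sum.cong)
  hence "(cmod (\<Sum>l\<in>I. f l * g l))\<^sup>2 \<le> (\<Sum>l\<in>I. cmod (f l) * cmod (g l))\<^sup>2"
    by (simp add: power_mono)
  also have "\<dots> \<le> (\<Sum>l\<in>I. (cmod (f l))\<^sup>2) * (\<Sum>l\<in>I. (cmod (g l))\<^sup>2)"
    by (rule cs_real)
  finally show ?thesis .
qed

definition vnorm :: "complex vec \<Rightarrow> real" where
  "vnorm v = sqrt (\<Sum>i<dim_vec v. (cmod (v $ i))\<^sup>2)"

lemma vnorm_nonneg: "vnorm v \<ge> 0"
  unfolding vnorm_def by (simp add: sum_nonneg)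

lemma mat_norm_nonneg: "mat_norm M \<ge> 0"
  unfolding mat_norm_def by (simp add: sum_nonneg)

lemma vnorm_sq: "(vnorm v)\<^sup>2 = (\<Sum>i<dim_vec v. (cmod (v $ i))\<^sup>2)"
  unfolding vnorm_def by (simp add: sum_nonneg)

lemma mat_norm_sq: "(mat_norm M)\<^sup>2 = (\<Sum>i<dim_row M. \<Sum>j<dim_col M. (cmod (M $$ (i,j)))\<^sup>2)"
  unfolding mat_norm_def by (simp add: sum_nonneg)

lemma vnorm_pos: assumes "v \<in> carrier_vec n" "v \<noteq> 0\<^sub>v n" shows "vnorm v > 0"
proof -
  from assms obtain i where i: "i < n" "v $ i \<noteq> 0"
    by (metis carrier_vecD eq_vecI index_zero_vec(1) index_zero_vec(2))
  have "0 < (cmod (v $ i))\<^sup>2" using i by simp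
  also have "\<dots> \<le> (\<Sum>i<dim_vec v. (cmod (v $ i))\<^sup>2)"
    by (rule member_le_sum) (use i assms in auto)
  finally show ?thesis unfolding vnorm_def by simp
qed

lemma vnorm_smult: "vnorm (c \<cdot>\<^sub>v v) = cmod c * vnorm v"
proof -
  have "(vnorm (c \<cdot>\<^sub>v v))\<^sup>2 = (cmod c * vnorm v)\<^sup>2"
    unfolding power_mult_distrib vnorm_sq
    by (simp add: norm_mult power_mult_distrib sum_distrib_left)
  thus ?thesis using vnorm_nonneg[of v] vnorm_nonneg[of "c \<cdot>\<^sub>v v"]
    by (metis norm_ge_zero power2_eq_imp_eq zero_le_mult_iff)
qed

lemma mat_vec_norm: assumes M: "M \<in> carrier_mat n m" and v: "v \<in> carrier_vec m"
  shows "vnorm (M *\<^sub>v v) \<le> mat_norm M * vnorm v"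
proof -
  have "(vnorm (M *\<^sub>v v))\<^sup>2 = (\<Sum>i<n. (cmod (\<Sum>j<m. M $$ (i,j) * v $ j))\<^sup>2)"
    unfolding vnorm_sq using M v
    by (intro sum.cong) (auto simp: mult_mat_vec_def scalar_prod_def atLeast0LessThan)
  also have "\<dots> \<le> (\<Sum>i<n. (\<Sum>j<m. (cmod (M $$ (i,j)))\<^sup>2) * (\<Sum>j<m. (cmod (v $ j))\<^sup>2))"
    by (intro sum_mono cs_cmod)
  also have "\<dots> = (mat_norm M * vnorm v)\<^sup>2"
    unfolding power_mult_distrib mat_norm_sq vnorm_sq using M v
    by (simp add: sum_distrib_right)
  finally have "(vnorm (M *\<^sub>v v))\<^sup>2 \<le> (mat_norm M * vnorm v)\<^sup>2" .
  thus ?thesis using mat_norm_nonneg[of M] vnorm_nonneg[of v]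
    by (meson power2_le_imp_le zero_le_mult_iff)
qed

lemma mat_norm_mult: assumes A: "A \<in> carrier_mat n k" and B: "B \<in> carrier_mat k m"
  shows "mat_norm (A * B) \<le> mat_norm A * mat_norm B"
proof -
  have "(mat_norm (A * B))\<^sup>2 = (\<Sum>i<n. \<Sum>j<m. (cmod (\<Sum>l<k. A $$ (i,l) * B $$ (l,j)))\<^sup>2)"
    unfolding mat_norm_sq using A B
    by (intro sum.cong) (auto simp: scalar_prod_def atLeast0LessThan)
  also have "\<dots> \<le> (\<Sum>i<n. \<Sum>j<m. (\<Sum>l<k. (cmod (A $$ (i,l)))\<^sup>2) * (\<Sum>l<k. (cmod (B $$ (l,j)))\<^sup>2))"
    by (intro sum_mono cs_cmod)
  also have "\<dots> = (\<Sum>i<n. \<Sum>l<k. (cmod (A $$ (i,l)))\<^sup>2) * (\<Sum>j<m. \<Sum>l<k. (cmod (B $$ (l,j)))\<^sup>2)"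
    by (rule sum_product[symmetric])
  also have "(\<Sum>j<m. \<Sum>l<k. (cmod (B $$ (l,j)))\<^sup>2) = (\<Sum>l<k. \<Sum>j<m. (cmod (B $$ (l,j)))\<^sup>2)"
    by (rule sum.swap)
  also have "(\<Sum>i<n. \<Sum>l<k. (cmod (A $$ (i,l)))\<^sup>2) * \<dots> = (mat_norm A * mat_norm B)\<^sup>2"
    unfolding power_mult_distrib mat_norm_sq using A B by simp
  finally have "(mat_norm (A * B))\<^sup>2 \<le> (mat_norm A * mat_norm B)\<^sup>2" .
  thus ?thesis using mat_norm_nonneg[of A] mat_norm_nonneg[of B]
    by (meson power2_le_imp_le zero_le_mult_iff)
qed

lemma mat_norm_smult: "mat_norm (c \<cdot>\<^sub>m M) = cmod c * mat_norm M"
proof -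
  have "(mat_norm (c \<cdot>\<^sub>m M))\<^sup>2 = (cmod c * mat_norm M)\<^sup>2"
    unfolding power_mult_distrib mat_norm_sq
    by (simp add: norm_mult power_mult_distrib sum_distrib_left)
  thus ?thesis using mat_norm_nonneg[of M] mat_norm_nonneg[of "c \<cdot>\<^sub>m M"]
    by (metis norm_ge_zero power2_eq_imp_eq zero_le_mult_iff)
qed

lemma mat_norm_bound: assumes "M \<in> carrier_mat n n" "norm_bound M b" "b \<ge> 0"
  shows "mat_norm M \<le> n * b"
proof -
  have "(mat_norm M)\<^sup>2 \<le> (\<Sum>i<n. \<Sum>j<n. b\<^sup>2)"
    unfolding mat_norm_sq carrier_matD[OF assms(1)]
  proof (intro sum_mono)
    fix i j assume "i \<in> {..<n}" "j \<in> {..<n}"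
    hence "cmod (M $$ (i,j)) \<le> b" using assms(1,2) unfolding norm_bound_def by auto
    thus "(cmod (M $$ (i,j)))\<^sup>2 \<le> b\<^sup>2" by (simp add: power_mono)
  qed
  also have "\<dots> = (real n * b)\<^sup>2" by (simp add: power2_eq_square)
  finally have "(mat_norm M)\<^sup>2 \<le> (real n * b)\<^sup>2" .
  thus ?thesis by (rule power2_le_imp_le) (use assms(3) in simp)
qed

lemma sr_eigen: assumes M: "M \<in> carrier_mat d d" and d: "d > 0"
  obtains l v where "v \<in> carrier_vec d" "v \<noteq> 0\<^sub>v d" "M *\<^sub>v v = l \<cdot>\<^sub>v v" "cmod l = spectral_radius M"
proof -
  from spectral_radius_mem_max(1)[OF M d] obtain l where "l \<in> spectrum M" "spectral_radius M = cmod l" by auto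
  then obtain v where "eigenvector M v l" unfolding spectrum_def eigenvalue_def by auto
  thus ?thesis using that M \<open>spectral_radius M = cmod l\<close> unfolding eigenvector_def by auto
qed

lemma sr_nonneg: assumes M: "M \<in> carrier_mat d d" and d: "d > 0" shows "spectral_radius M \<ge> 0"
  using sr_eigen[OF M d] by (metis norm_ge_zero)

lemma eigen_le_sr: assumes M: "M \<in> carrier_mat d d" and d: "d > 0"
  and v: "v \<in> carrier_vec d" "v \<noteq> 0\<^sub>v d" "M *\<^sub>v v = l \<cdot>\<^sub>v v"
  shows "cmod l \<le> spectral_radius M"
proof -
  have "eigenvector M v l" unfolding eigenvector_def using v M by auto
  hence "l \<in> spectrum M" unfolding spectrum_def eigenvalue_def by auto
  thus ?thesis using spectral_radius_mem_max(2)[OF M d] by auto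
qed

lemma pow_eigen: fixes M :: "complex mat" assumes M: "M \<in> carrier_mat d d" and v: "v \<in> carrier_vec d" "M *\<^sub>v v = l \<cdot>\<^sub>v v"
  shows "(M ^\<^sub>m k) *\<^sub>v v = (l ^ k) \<cdot>\<^sub>v v"
proof (induction k)
  case 0 then show ?case using v M by auto
next
  case (Suc k)
  have "(M ^\<^sub>m Suc k) *\<^sub>v v = (M ^\<^sub>m k) *\<^sub>v (M *\<^sub>v v)"
    by (simp, rule assoc_mult_mat_vec[OF pow_carrier_mat[OF M] M v(1)])
  also have "\<dots> = l \<cdot>\<^sub>v ((M ^\<^sub>m k) *\<^sub>v v)" using v M
    by (simp add: v(2) mult_mat_vec[OF pow_carrier_mat[OF M] v(1)])
  also have "\<dots> = (l ^ Suc k) \<cdot>\<^sub>v v" using Suc by (simp add: smult_smult_assoc mult.commute)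
  finally show ?case .
qed

lemma sr_pow_le_norm: assumes M: "M \<in> carrier_mat d d" and d: "d > 0"
  shows "spectral_radius M ^ k \<le> mat_norm (M ^\<^sub>m k)"
proof -
  obtain l v where v: "v \<in> carrier_vec d" "v \<noteq> 0\<^sub>v d" "M *\<^sub>v v = l \<cdot>\<^sub>v v" "cmod l = spectral_radius M"
    by (rule sr_eigen[OF M d])
  have "cmod l ^ k * vnorm v = vnorm ((M ^\<^sub>m k) *\<^sub>v v)"
    using pow_eigen[OF M v(1) v(3)] by (simp add: vnorm_smult norm_power)
  also have "\<dots> \<le> mat_norm (M ^\<^sub>m k) * vnorm v"
    by (rule mat_vec_norm[OF pow_carrier_mat[OF M] v(1)])
  finally show ?thesis using vnorm_pos[OF v(1,2)] v(4) by simp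
qed

lemma sr_le_norm: assumes M: "M \<in> carrier_mat d d" and d: "d > 0"
  shows "spectral_radius M \<le> mat_norm M"
  using sr_pow_le_norm[OF M d, of 1] M by simp

definition prodw :: "nat \<Rightarrow> complex mat list \<Rightarrow> complex mat" where
  "prodw d w = foldr (\<lambda>M P. M * P) w (1\<^sub>m d)"

lemma prodw_Nil[simp]: "prodw d [] = 1\<^sub>m d" by (simp add: prodw_def)
lemma prodw_Cons[simp]: "prodw d (M # w) = M * prodw d w" by (simp add: prodw_def)

lemma prodw_carrier: "set w \<subseteq> carrier_mat d d \<Longrightarrow> prodw d w \<in> carrier_mat d d"
  by (induction w) auto

lemma prodw_append: assumes "set w1 \<subseteq> carrier_mat d d" "set w2 \<subseteq> carrier_mat d d"
  shows "prodw d (w1 @ w2) = prodw d w1 * prodw d w2"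
  using assms(1)
proof (induction w1)
  case Nil then show ?case using prodw_carrier[OF assms(2)] by simp
next
  case (Cons M w1)
  hence M: "M \<in> carrier_mat d d" and w1: "set w1 \<subseteq> carrier_mat d d" by auto
  have "prodw d ((M # w1) @ w2) = M * (prodw d w1 * prodw d w2)" using Cons w1 by simp
  also have "\<dots> = (M * prodw d w1) * prodw d w2"
    using assoc_mult_mat[OF M prodw_carrier[OF w1] prodw_carrier[OF assms(2)]] by simp
  finally show ?case by simp
qed

lemma products_words: "products d X n = {prodw d w | w. set w \<subseteq> X \<and> length w = n}"
proof (induction n)
  case 0 then show ?case by auto
next
  case (Suc n)
  show ?case
  proof (intro equalityI subsetI)
    fix P assume "P \<in> products d X (Suc n)"
    then obtain M Q where "P = M * Q" "M \<in> X" "Q \<in> products d X n" by auto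
    then obtain w where "Q = prodw d w" "set w \<subseteq> X" "length w = n" using Suc by auto
    thus "P \<in> {prodw d w | w. set w \<subseteq> X \<and> length w = Suc n}"
      using \<open>P = M * Q\<close> \<open>M \<in> X\<close> by (intro CollectI exI[of _ "M # w"]) auto
  next
    fix P assume "P \<in> {prodw d w | w. set w \<subseteq> X \<and> length w = Suc n}"
    then obtain w where w: "P = prodw d w" "set w \<subseteq> X" "length w = Suc n" by auto
    then obtain M w' where "w = M # w'" by (cases w) auto
    thus "P \<in> products d X (Suc n)" using w Suc by auto
  qed
qed

lemma products_carrier: "X \<subseteq> carrier_mat d d \<Longrightarrow> products d X n \<subseteq> carrier_mat d d"
  unfolding products_words using prodw_carrier by blast

lemma finite_products: "finite X \<Longrightarrow> finite (products d X n)"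
proof (induction n)
  case 0 then show ?case by simp
next
  case (Suc n)
  have "products d X (Suc n) = (\<lambda>(M,P). M * P) ` (X \<times> products d X n)" by auto
  thus ?case using Suc by simp
qed

lemma products_nonempty: "X \<noteq> {} \<Longrightarrow> products d X n \<noteq> {}"
  by (induction n) auto

lemma products_mono: "X \<subseteq> Y \<Longrightarrow> products d X n \<subseteq> products d Y n"
  by (induction n) auto

lemma products_mult: assumes X: "X \<subseteq> carrier_mat d d"
  and P: "P \<in> products d X m" and Q: "Q \<in> products d X n"
  shows "P * Q \<in> products d X (m + n)"
proof -
  obtain w1 where w1: "P = prodw d w1" "set w1 \<subseteq> X" "length w1 = m" using P unfolding products_words by auto
  obtain w2 where w2: "Q = prodw d w2" "set w2 \<subseteq> X" "length w2 = n" using Q unfolding products_words by auto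
  have "P * Q = prodw d (w1 @ w2)" using w1 w2 X prodw_append[of w1 d w2] by auto
  thus ?thesis unfolding products_words using w1 w2 by (intro CollectI exI[of _ "w1 @ w2"]) auto
qed

lemma products_split: assumes X: "X \<subseteq> carrier_mat d d" and P: "P \<in> products d X (m + n)"
  shows "\<exists>P1 Q. P1 \<in> products d X m \<and> Q \<in> products d X n \<and> P = P1 * Q"
proof -
  obtain w where w: "P = prodw d w" "set w \<subseteq> X" "length w = m + n" using P unfolding products_words by auto
  have "w = take m w @ drop m w" by simp
  hence "P = prodw d (take m w) * prodw d (drop m w)"
    using w X prodw_append[of "take m w" d "drop m w"]
    by (metis (no_types, lifting) order_trans set_drop_subset set_take_subset)
  moreover have "prodw d (take m w) \<in> products d X m" unfolding products_words using w
    by (auto intro!: exI[of _ "take m w"] dest: in_set_takeD)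
  moreover have "prodw d (drop m w) \<in> products d X n" unfolding products_words using w
    by (auto intro!: exI[of _ "drop m w"] dest: in_set_dropD)
  ultimately show ?thesis by blast
qed

lemma products_pow: assumes X: "X \<subseteq> carrier_mat d d" and P: "P \<in> products d X n"
  shows "P ^\<^sub>m k \<in> products d X (n * k)"
proof (induction k)
  case 0 then show ?case using products_carrier[OF X] P by auto
next
  case (Suc k)
  have "P ^\<^sub>m Suc k = P ^\<^sub>m k * P" by simp
  also have "\<dots> \<in> products d X (n * k + n)" by (rule products_mult[OF X Suc P])
  finally show ?case by (simp add: add.commute)
qed

lemma products_one: "products d X 1 = {M * 1\<^sub>m d | M. M \<in> X}"
  by auto

definition sn :: "nat \<Rightarrow> complex mat set \<Rightarrow> nat \<Rightarrow> real" where
  "sn d X n = Max (mat_norm ` products d X n)"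

lemma sn_ge: "finite X \<Longrightarrow> P \<in> products d X n \<Longrightarrow> mat_norm P \<le> sn d X n"
  unfolding sn_def by (rule Max_ge) (auto simp: finite_products)

lemma sn_attained: "finite X \<Longrightarrow> X \<noteq> {} \<Longrightarrow> \<exists>P \<in> products d X n. sn d X n = mat_norm P"
proof -
  assume "finite X" "X \<noteq> {}"
  hence "Max (mat_norm ` products d X n) \<in> mat_norm ` products d X n"
    by (intro Max_in) (auto simp: finite_products products_nonempty)
  then obtain P where "P \<in> products d X n" "Max (mat_norm ` products d X n) = mat_norm P" by blast
  thus ?thesis unfolding sn_def by blast
qed

lemma sn_nonneg: "finite X \<Longrightarrow> X \<noteq> {} \<Longrightarrow> sn d X n \<ge> 0"
  using sn_attained[of X d n] mat_norm_nonneg by metis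

lemma sn_submult: assumes "finite X" "X \<noteq> {}" "X \<subseteq> carrier_mat d d"
  shows "sn d X (m + n) \<le> sn d X m * sn d X n"
proof -
  obtain P where P: "P \<in> products d X (m + n)" "sn d X (m + n) = mat_norm P"
    using sn_attained[OF assms(1,2)] by blast
  obtain P1 Q where PQ: "P1 \<in> products d X m" "Q \<in> products d X n" "P = P1 * Q"
    using products_split[OF assms(3) P(1)] by blast
  have "mat_norm P \<le> mat_norm P1 * mat_norm Q"
    unfolding PQ(3) using products_carrier[OF assms(3)] PQ by (intro mat_norm_mult[of P1 d d Q d]) auto
  also have "\<dots> \<le> sn d X m * sn d X n"
    by (intro mult_mono sn_ge assms PQ mat_norm_nonneg sn_nonneg)
  finally show ?thesis using P by simp
qed

lemma sn_mono: "X \<subseteq> Y \<Longrightarrow> finite Y \<Longrightarrow> X \<noteq> {} \<Longrightarrow> sn d X n \<le> sn d Y n"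
  unfolding sn_def
  by (rule Max_mono) (auto simp: finite_products products_nonempty dest: products_mono[of X Y d n])

lemma jsr_term: assumes "finite X" "X \<noteq> {}"
  shows "Sup ((\<lambda>P. mat_norm P powr (1 / real n)) ` products d X n) = sn d X n powr (1 / real n)"
proof -
  let ?S = "(\<lambda>P. mat_norm P powr (1 / real n)) ` products d X n"
  have fin: "finite ?S" "?S \<noteq> {}" using assms by (auto simp: finite_products products_nonempty)
  obtain P where P: "P \<in> products d X n" "sn d X n = mat_norm P"
    using sn_attained[OF assms] by blast
  have "Sup ?S = Max ?S" using fin by (simp add: cSup_eq_Max)
  also have "\<dots> = sn d X n powr (1 / real n)"
  proof (rule antisym)
    show "Max ?S \<le> sn d X n powr (1 / real n)"
      using fin by (auto intro!: powr_mono2 mat_norm_nonneg sn_ge assms)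
    show "sn d X n powr (1 / real n) \<le> Max ?S"
      using fin P by (intro Max_ge) auto
  qed
  finally show ?thesis .
qed

lemma jsr_sn: assumes "finite X" "X \<noteq> {}"
  shows "jsr d X = lim (\<lambda>n. sn d X n powr (1 / real n))"
  unfolding jsr_def jsr_term[OF assms] ..

lemma root_pow: "x \<ge> 0 \<Longrightarrow> n > 0 \<Longrightarrow> (x powr (1 / real n)) ^ n = (x::real)"
proof -
  assume "x \<ge> 0" "n > 0"
  show ?thesis
  proof (cases "x = 0")
    case True then show ?thesis using \<open>n > 0\<close> by simp
  next
    case False
    hence "x > 0" using \<open>x \<ge> 0\<close> by simp
    hence "(x powr (1 / real n)) ^ n = (x powr (1 / real n)) powr (real n)"
      by (simp add: powr_realpow)
    also have "\<dots> = x" using \<open>n > 0\<close> \<open>x > 0\<close> by (simp add: powr_powr)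
    finally show ?thesis .
  qed
qed

lemma pow_root: "x \<ge> 0 \<Longrightarrow> n > 0 \<Longrightarrow> (x ^ n) powr (1 / real n) = (x::real)"
proof -
  assume "x \<ge> 0" "n > 0"
  show ?thesis
  proof (cases "x = 0")
    case True then show ?thesis using \<open>n > 0\<close> by simp
  next
    case False
    hence "x > 0" using \<open>x \<ge> 0\<close> by simp
    hence "(x ^ n) powr (1 / real n) = (x powr (real n)) powr (1 / real n)"
      by (simp add: powr_realpow)
    also have "\<dots> = x" using \<open>n > 0\<close> \<open>x > 0\<close> by (simp add: powr_powr)
    finally show ?thesis .
  qed
qed

lemma fekete:
  fixes s :: "nat \<Rightarrow> real"
  assumes nn: "\<And>n. s n \<ge> 0" and sm: "\<And>m n. s (m + n) \<le> s m * s n"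
  shows "(\<lambda>n. s n powr (1 / real n)) \<longlonglongrightarrow> Inf ((\<lambda>n. s n powr (1 / real n)) ` {1..})"
    and "\<And>n. n \<ge> 1 \<Longrightarrow> Inf ((\<lambda>n. s n powr (1 / real n)) ` {1..}) \<le> s n powr (1 / real n)"
    and "Inf ((\<lambda>n. s n powr (1 / real n)) ` {1..}) \<ge> 0"
proof -
  define a where "a = (\<lambda>n. s n powr (1 / real n))"
  let ?L = "Inf (a ` {1..})"
  have bdd: "bdd_below (a ` {1..})" by (rule bdd_belowI[of _ 0]) (auto simp: a_def)
  have low: "?L \<le> a n" if "n \<ge> 1" for n by (rule cInf_lower) (use bdd that in auto)
  thus "\<And>n. n \<ge> 1 \<Longrightarrow> Inf ((\<lambda>n. s n powr (1 / real n)) ` {1..}) \<le> s n powr (1 / real n)"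
    unfolding a_def by blast
  have L0: "?L \<ge> 0" by (rule cInf_greatest) (auto simp: a_def)
  thus "Inf ((\<lambda>n. s n powr (1 / real n)) ` {1..}) \<ge> 0" unfolding a_def .
  have step: "s (q * m + r) \<le> s m ^ q * s r" for q m r
  proof (induction q)
    case 0 then show ?case by simp
  next
    case (Suc q)
    have "s (Suc q * m + r) = s (m + (q * m + r))" by (simp add: add.assoc)
    also have "\<dots> \<le> s m * s (q * m + r)" by (rule sm)
    also have "\<dots> \<le> s m * (s m ^ q * s r)" by (rule mult_left_mono[OF Suc nn])
    finally show ?case by (simp add: mult.assoc)
  qed
  have "a \<longlonglongrightarrow> ?L"
  proof (rule order_tendstoI)
    fix y assume "y < ?L"
    show "eventually (\<lambda>n. y < a n) sequentially"
      using eventually_ge_at_top[of 1] by eventually_elim (use low \<open>y < ?L\<close> in force)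
  next
    fix y assume y: "?L < y"
    define b where "b = (?L + y) / 2"
    have "?L < b" "b < y" "b > 0" using y L0 by (auto simp: b_def)
    then obtain m where m: "m \<ge> 1" "a m < b"
      using cInf_less_iff[of "a ` {1..}" b] bdd by auto
    have smb: "s m \<le> b ^ m"
    proof -
      have "s m = (a m) ^ m" unfolding a_def using root_pow[OF nn, of m] m by simp
      also have "\<dots> \<le> b ^ m" using m by (intro power_mono) (auto simp: a_def)
      finally show ?thesis .
    qed
    define K where "K = 1 + (\<Sum>r<m. s r / b ^ r)"
    have K1: "K \<ge> 1" unfolding K_def using \<open>b > 0\<close> nn by (simp add: sum_nonneg)
    have K: "s n \<le> K * b ^ n" for n
    proof -
      define q r where "q = n div m" and "r = n mod m"
      have n: "n = q * m + r" unfolding q_def r_def by simp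
      have r: "r < m" unfolding r_def using m by simp
      have "s r / b ^ r \<le> (\<Sum>r<m. s r / b ^ r)"
        by (rule member_le_sum) (use r nn \<open>b > 0\<close> in auto)
      hence sr: "s r \<le> K * b ^ r" unfolding K_def using \<open>b > 0\<close>
        by (simp add: divide_le_eq algebra_simps)
          (smt (verit) zero_less_power)
      have "s n \<le> s m ^ q * s r" using step n by simp
      also have "\<dots> \<le> (b ^ m) ^ q * (K * b ^ r)"
        by (intro mult_mono power_mono smb sr) (use nn \<open>b > 0\<close> in auto)
      also have "\<dots> = K * b ^ n" unfolding n by (simp add: power_add power_mult mult.commute mult.left_commute)
      finally show ?thesis .
    qed
    have "(\<lambda>n. K powr (1 / real n) * b) \<longlonglongrightarrow> K powr 0 * b"
      by (intro tendsto_mult tendsto_const tendsto_powr lim_1_over_n) (use K1 in auto)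
    hence "(\<lambda>n. K powr (1 / real n) * b) \<longlonglongrightarrow> b" using K1 by simp
    hence ev: "eventually (\<lambda>n. K powr (1 / real n) * b < y) sequentially"
      using \<open>b < y\<close> by (rule order_tendstoD(2))
    show "eventually (\<lambda>n. a n < y) sequentially"
      using ev eventually_ge_at_top[of 1]
    proof eventually_elim
      case (elim n)
      have "a n \<le> (K * b ^ n) powr (1 / real n)"
        unfolding a_def by (intro powr_mono2 K nn) auto
      also have "\<dots> = K powr (1 / real n) * b"
        using K1 \<open>b > 0\<close> elim by (simp add: powr_mult pow_root)
      finally show ?case using elim by simp
    qed
  qed
  thus "(\<lambda>n. s n powr (1 / real n)) \<longlonglongrightarrow> Inf ((\<lambda>n. s n powr (1 / real n)) ` {1..})"
    unfolding a_def .
qed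

lemma aux_div: "(x::real) \<noteq> 0 \<Longrightarrow> x * (1 / (y * x)) = 1 / y"
  by (cases "y = 0") (simp_all add: field_simps)

lemma jsr_lim: assumes X: "finite X" "X \<noteq> {}" "X \<subseteq> carrier_mat d d"
  shows "(\<lambda>n. sn d X n powr (1 / real n)) \<longlonglongrightarrow> jsr d X"
    and "\<And>n. n \<ge> 1 \<Longrightarrow> jsr d X \<le> sn d X n powr (1 / real n)"
    and "jsr d X \<ge> 0"
proof -
  note f = fekete[of "sn d X", OF sn_nonneg[OF X(1,2)] sn_submult[OF X]]
  have "jsr d X = Inf ((\<lambda>n. sn d X n powr (1 / real n)) ` {1..})"
    unfolding jsr_sn[OF X(1,2)] using f(1) by (rule limI)
  thus "(\<lambda>n. sn d X n powr (1 / real n)) \<longlonglongrightarrow> jsr d X"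
    "\<And>n. n \<ge> 1 \<Longrightarrow> jsr d X \<le> sn d X n powr (1 / real n)" "jsr d X \<ge> 0"
    using f by auto
qed

lemma sr_le_jsr: assumes X: "finite X" "X \<noteq> {}" "X \<subseteq> carrier_mat d d" and d: "d > 0"
  and P: "P \<in> products d X n" and n: "n \<ge> 1"
  shows "spectral_radius P powr (1 / real n) \<le> jsr d X"
    and "spectral_radius P \<le> jsr d X ^ n"
proof -
  have Pc: "P \<in> carrier_mat d d" using products_carrier[OF X(3)] P by auto
  define r where "r = spectral_radius P"
  have r0: "r \<ge> 0" unfolding r_def by (rule sr_nonneg[OF Pc d])
  have bound: "r powr (1 / real n) \<le> sn d X (n * (k + 1)) powr (1 / real (n * (k + 1)))" for k
  proof (cases "r = 0")
    case True then show ?thesis by (simp add: sn_nonneg[OF X(1,2)])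
  next
    case False
    hence rp: "r > 0" using r0 by simp
    have "r ^ (k + 1) \<le> mat_norm (P ^\<^sub>m (k + 1))" unfolding r_def by (rule sr_pow_le_norm[OF Pc d])
    also have "\<dots> \<le> sn d X (n * (k + 1))" by (rule sn_ge[OF X(1) products_pow[OF X(3) P]])
    finally have le: "r ^ (k + 1) \<le> sn d X (n * (k + 1))" .
    have e1: "(r ^ (k + 1)) powr (1 / real (n * (k + 1))) = (r powr real (k + 1)) powr (1 / real (n * (k + 1)))"
      using rp by (simp only: powr_realpow)
    have e2: "(r powr real (k + 1)) powr (1 / real (n * (k + 1))) = r powr (real (k + 1) * (1 / real (n * (k + 1))))"
      by (rule powr_powr)
    have e3: "real (k + 1) * (1 / real (n * (k + 1))) = 1 / real n"
      unfolding of_nat_mult by (rule aux_div) simp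
    have "r powr (1 / real n) = (r ^ (k + 1)) powr (1 / real (n * (k + 1)))"
      by (simp only: e1 e2 e3)
    also have "\<dots> \<le> sn d X (n * (k + 1)) powr (1 / real (n * (k + 1)))"
      by (rule powr_mono2) (use le rp in auto)
    finally show ?thesis .
  qed
  have sm: "strict_mono (\<lambda>k. n * (k + 1))" using n by (intro strict_monoI) auto
  have lim: "(\<lambda>k. sn d X (n * (k + 1)) powr (1 / real (n * (k + 1)))) \<longlonglongrightarrow> jsr d X"
    using LIMSEQ_subseq_LIMSEQ[OF jsr_lim(1)[OF X] sm] by (simp add: o_def)
  show 1: "spectral_radius P powr (1 / real n) \<le> jsr d X"
    unfolding r_def[symmetric] by (rule LIMSEQ_le_const[OF lim]) (use bound in auto)
  have "r = (r powr (1 / real n)) ^ n" using root_pow[OF r0, of n] n by simp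
  also have "\<dots> \<le> jsr d X ^ n" using 1 unfolding r_def[symmetric]
    by (intro power_mono) auto
  finally show "spectral_radius P \<le> jsr d X ^ n" unfolding r_def .
qed

lemma jsr_mono: assumes "X \<subseteq> Y" "X \<noteq> {}" "finite Y" "Y \<subseteq> carrier_mat d d"
  shows "jsr d X \<le> jsr d Y"
proof -
  have X: "finite X" "X \<noteq> {}" "X \<subseteq> carrier_mat d d" using assms finite_subset by auto
  have Y: "finite Y" "Y \<noteq> {}" "Y \<subseteq> carrier_mat d d" using assms by auto
  show ?thesis
  proof (rule LIMSEQ_le[OF jsr_lim(1)[OF X] jsr_lim(1)[OF Y]])
    show "\<exists>N. \<forall>n\<ge>N. sn d X n powr (1 / real n) \<le> sn d Y n powr (1 / real n)"
      by (intro exI[of _ 0] allI impI powr_mono2 sn_mono sn_nonneg) (use assms X in auto)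
  qed
qed

lemma mult_entry: assumes "A \<in> carrier_mat n k" "B \<in> carrier_mat k m" "i < n" "j < m"
  shows "(A * B) $$ (i,j) = (\<Sum>l<k. A $$ (i,l) * B $$ (l,j))"
  using assms by (auto simp: scalar_prod_def atLeast0LessThan)

lemma mv_entry: assumes "A \<in> carrier_mat n k" "v \<in> carrier_vec k" "i < n"
  shows "(A *\<^sub>v v) $ i = (\<Sum>l<k. A $$ (i,l) * v $ l)"
  using assms by (auto simp: scalar_prod_def atLeast0LessThan)

lemma rank_lt2_struct:
  fixes a :: "complex mat"
  assumes a: "a \<in> carrier_mat d d" and r: "vec_space.rank d a < 2" and nz: "a \<noteq> 0\<^sub>m d d"
  shows "\<exists>u g. u \<in> carrier_vec d \<and> u \<noteq> 0\<^sub>v d \<and> (\<forall>i<d. \<forall>j<d. a $$ (i,j) = u $ i * g j)"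
proof -
  interpret vec_space "TYPE(complex)" d .
  obtain i0 j0 where ij: "i0 < d" "j0 < d" "a $$ (i0,j0) \<noteq> 0"
    using nz a by (metis carrier_matD(1) carrier_matD(2) eq_matI index_zero_mat(1) index_zero_mat(2) index_zero_mat(3))
  define u where "u = col a j0"
  have u: "u \<in> carrier_vec d" unfolding u_def using a by auto
  have ui0: "u $ i0 \<noteq> 0" unfolding u_def using ij a by auto
  have unz: "u \<noteq> 0\<^sub>v d" using ui0 ij by auto
  have mult: "\<exists>t. col a j = t \<cdot>\<^sub>v u" if j: "j < d" for j
  proof (rule ccontr)
    assume nt: "\<not> (\<exists>t. col a j = t \<cdot>\<^sub>v u)"
    define w where "w = col a j"
    have w: "w \<in> carrier_vec d" unfolding w_def using a by auto
    have uw: "u \<noteq> w"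
    proof
      assume "u = w"
      hence "col a j = 1 \<cdot>\<^sub>v u" unfolding w_def using u by simp
      thus False using nt by blast
    qed
    define B where "B = mat_of_cols d [u, w]"
    have B: "B \<in> carrier_mat d 2" unfolding B_def using mat_of_cols_carrier[of d "[u,w]"] by (simp add: numeral_2_eq_2)
    have cB: "cols B = [u, w]" unfolding B_def using u w by (intro cols_mat_of_cols) auto
    have li: "lin_indpt {u, w}"
    proof
      assume ld: "lin_dep {u, w}"
      hence ld': "lin_dep (set (cols B))" unfolding cB by simp
      have dB: "distinct (cols B)" unfolding cB using uw by simp
      obtain v where v: "v \<in> carrier_vec 2" "v \<noteq> 0\<^sub>v 2" "B *\<^sub>v v = 0\<^sub>v d"
        using lin_depE[OF B ld' dB] by blast
      have comp: "u $ i * v $ 0 + w $ i * v $ 1 = 0" if i: "i < d" for i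
      proof -
        have "(B *\<^sub>v v) $ i = (\<Sum>l<2. B $$ (i,l) * v $ l)" by (rule mv_entry[OF B v(1) i])
        also have "\<dots> = u $ i * v $ 0 + w $ i * v $ 1"
          unfolding B_def using i by (simp add: numeral_2_eq_2 mat_of_cols_index)
        finally show ?thesis using v(3) i by simp
      qed
      show False
      proof (cases "v $ 1 = 0")
        case True
        have "v $ 0 \<noteq> 0"
        proof
          assume "v $ 0 = 0"
          hence "v = 0\<^sub>v 2" using True v(1)
            by (intro eq_vecI) (auto simp: less_2_cases_iff)
          thus False using v(2) by simp
        qed
        thus False using comp[OF ij(1)] True ui0 by simp
      next
        case False
        have "col a j = (- (v $ 0) / v $ 1) \<cdot>\<^sub>v u"
        proof (rule eq_vecI)
          fix i assume "i < dim_vec ((- (v $ 0) / v $ 1) \<cdot>\<^sub>v u)"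
          hence i: "i < d" using u by simp
          have "w $ i = (- (v $ 0) / v $ 1) * u $ i"
            using comp[OF i] False by (simp add: field_simps) (metis add_eq_0_iff mult.commute)
          thus "col a j $ i = ((- (v $ 0) / v $ 1) \<cdot>\<^sub>v u) $ i" unfolding w_def using i u by simp
        qed (use u a in simp)
        thus False using nt by blast
      qed
    qed
    have sub: "{u, w} \<subseteq> set (cols a)"
      unfolding u_def w_def using ij(2) j a by (auto simp: cols_def)
    have "card {u, w} \<le> rank a" by (rule rank_ge_card_indpt[OF a sub li])
    thus False using uw r by simp
  qed
  define g where "g j = (SOME t. col a j = t \<cdot>\<^sub>v u)" for j
  have g: "col a j = g j \<cdot>\<^sub>v u" if "j < d" for j
    unfolding g_def using someI_ex[OF mult[OF that]] .
  have "\<forall>i<d. \<forall>j<d. a $$ (i,j) = u $ i * g j"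
  proof (intro allI impI)
    fix i j assume i: "i < d" and j: "j < d"
    have "a $$ (i,j) = col a j $ i" using i j a by simp
    also have "\<dots> = g j * u $ i" unfolding g[OF j] using i u by simp
    finally show "a $$ (i,j) = u $ i * g j" by simp
  qed
  thus ?thesis using u unz by blast
qed

lemma rank1_sandwich:
  fixes a Z :: "complex mat"
  assumes u: "u \<in> carrier_vec d" and au: "\<forall>i<d. \<forall>j<d. a $$ (i,j) = u $ i * g j"
    and a: "a \<in> carrier_mat d d" and Z: "Z \<in> carrier_mat d d"
  shows "a * Z * a = (\<Sum>l<d. (\<Sum>k<d. g k * Z $$ (k,l)) * u $ l) \<cdot>\<^sub>m a"
    and "(a * Z) *\<^sub>v u = (\<Sum>l<d. (\<Sum>k<d. g k * Z $$ (k,l)) * u $ l) \<cdot>\<^sub>v u"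
proof -
  define h where "h l = (\<Sum>k<d. g k * Z $$ (k,l))" for l
  define c where "c = (\<Sum>l<d. h l * u $ l)"
  have aZ: "a * Z \<in> carrier_mat d d" using a Z by simp
  have aZe: "(a * Z) $$ (i,l) = u $ i * h l" if "i < d" "l < d" for i l
  proof -
    have "(a * Z) $$ (i,l) = (\<Sum>k<d. a $$ (i,k) * Z $$ (k,l))" by (rule mult_entry[OF a Z that])
    also have "\<dots> = (\<Sum>k<d. u $ i * (g k * Z $$ (k,l)))" using au that by (intro sum.cong) auto
    also have "\<dots> = u $ i * h l" unfolding h_def by (simp add: sum_distrib_left)
    finally show ?thesis .
  qed
  have "a * Z * a = c \<cdot>\<^sub>m a"
  proof (rule eq_matI)
    fix i j assume "i < dim_row (c \<cdot>\<^sub>m a)" "j < dim_col (c \<cdot>\<^sub>m a)"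
    hence i: "i < d" and j: "j < d" using a by auto
    have "(a * Z * a) $$ (i,j) = (\<Sum>l<d. (a * Z) $$ (i,l) * a $$ (l,j))" by (rule mult_entry[OF aZ a i j])
    also have "\<dots> = (\<Sum>l<d. (u $ i * g j) * (h l * u $ l))" using aZe au i j by (intro sum.cong) auto
    also have "\<dots> = c * a $$ (i,j)" unfolding c_def using au i j by (simp add: sum_distrib_left mult.commute)
    finally show "(a * Z * a) $$ (i,j) = (c \<cdot>\<^sub>m a) $$ (i,j)" using i j a by simp
  qed (use a Z in auto)
  thus "a * Z * a = (\<Sum>l<d. (\<Sum>k<d. g k * Z $$ (k,l)) * u $ l) \<cdot>\<^sub>m a" unfolding c_def h_def .
  have "(a * Z) *\<^sub>v u = c \<cdot>\<^sub>v u"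
  proof (rule eq_vecI)
    fix i assume "i < dim_vec (c \<cdot>\<^sub>v u)"
    hence i: "i < d" using u by auto
    have "((a * Z) *\<^sub>v u) $ i = (\<Sum>l<d. (a * Z) $$ (i,l) * u $ l)" by (rule mv_entry[OF aZ u i])
    also have "\<dots> = (\<Sum>l<d. u $ i * (h l * u $ l))" using aZe i by (intro sum.cong) auto
    also have "\<dots> = c * u $ i" unfolding c_def by (simp add: sum_distrib_left mult.commute)
    finally show "((a * Z) *\<^sub>v u) $ i = (c \<cdot>\<^sub>v u) $ i" using i u by simp
  qed (use a Z u in auto)
  thus "(a * Z) *\<^sub>v u = (\<Sum>l<d. (\<Sum>k<d. g k * Z $$ (k,l)) * u $ l) \<cdot>\<^sub>v u" unfolding c_def h_def .
qed

lemma dup_split: "\<not> distinct (filter P w) \<Longrightarrow>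
  \<exists>w1 a z w2. w = w1 @ a # z @ a # w2 \<and> P a \<and> distinct (filter P (a # z))"
proof (induction w)
  case Nil then show ?case by simp
next
  case (Cons x w')
  show ?case
  proof (cases "distinct (filter P w')")
    case False
    then obtain w1 a z w2 where "w' = w1 @ a # z @ a # w2" "P a" "distinct (filter P (a # z))"
      using Cons.IH by blast
    thus ?thesis by (intro exI[of _ "x # w1"]) auto
  next
    case True
    have Px: "P x" and xin: "x \<in> set (filter P w')" using Cons.prems True by (auto split: if_splits)
    hence "x \<in> set w'" by simp
    then obtain ys zs where yz: "w' = ys @ x # zs" "x \<notin> set ys" using split_list_first by metis
    have "distinct (filter P ys)" using True yz(1) by simp
    hence "distinct (filter P (x # ys))" using yz(2) Px by simp
    thus ?thesis using yz Px by (intro exI[of _ "[]"] exI[of _ x] exI[of _ ys] exI[of _ zs]) auto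
  qed
qed

lemma seg_bound:
  assumes A: "A \<subseteq> carrier_mat d d" and RA: "R \<subseteq> A" and th: "\<theta> > 0" and C: "C \<ge> 1" and D: "D \<ge> 0"
    and DA: "\<And>M. M \<in> A \<Longrightarrow> mat_norm M \<le> D"
    and Rb: "\<And>m Q. Q \<in> products d R m \<Longrightarrow> mat_norm Q \<le> C * \<theta> ^ m"
  shows "set w \<subseteq> A \<Longrightarrow> mat_norm (prodw d w) \<le>
     C ^ (length (filter (\<lambda>M. M \<notin> R) w) + 1) * (D / \<theta>) ^ length (filter (\<lambda>M. M \<notin> R) w) * \<theta> ^ length w"
proof (induction w rule: length_induct)
  case (1 w)
  define r where "r = takeWhile (\<lambda>M. M \<in> R) w"
  define rest where "rest = dropWhile (\<lambda>M. M \<in> R) w"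
  have wr: "w = r @ rest" unfolding r_def rest_def by simp
  have rR: "set r \<subseteq> R" unfolding r_def by (auto dest: set_takeWhileD)
  have fr: "filter (\<lambda>M. M \<notin> R) r = []" using rR by (auto simp: filter_empty_conv)
  have wc: "set w \<subseteq> carrier_mat d d" using 1(2) A by auto
  have rc: "set r \<subseteq> carrier_mat d d" using rR RA A by auto
  have rprod: "prodw d r \<in> products d R (length r)" unfolding products_words using rR by auto
  show ?case
  proof (cases rest)
    case Nil
    hence "w = r" using wr by simp
    thus ?thesis using Rb[OF rprod] fr by simp
  next
    case (Cons M w'')
    have MR: "M \<notin> R" using hd_dropWhile[of "\<lambda>M. M \<in> R" w] Cons unfolding rest_def by auto
    have w: "w = r @ M # w''" using wr Cons by simp
    have MA: "M \<in> A" and w''A: "set w'' \<subseteq> A" using 1(2) w by auto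
    have Mc: "M \<in> carrier_mat d d" using MA A by auto
    have w''c: "set w'' \<subseteq> carrier_mat d d" using w''A A by auto
    define j where "j = length (filter (\<lambda>M. M \<notin> R) w'')"
    have fj: "length (filter (\<lambda>M. M \<notin> R) w) = Suc j" unfolding w j_def using fr MR by simp
    have IH: "mat_norm (prodw d w'') \<le> C ^ (j + 1) * (D / \<theta>) ^ j * \<theta> ^ length w''"
      using 1(1) w''A unfolding j_def w by auto
    have pw: "prodw d w = prodw d r * (M * prodw d w'')"
      unfolding w using prodw_append[OF rc, of "M # w''"] Mc w''c by simp
    have "mat_norm (prodw d w) \<le> mat_norm (prodw d r) * mat_norm (M * prodw d w'')"
      unfolding pw using prodw_carrier[OF rc] Mc prodw_carrier[OF w''c]
      by (intro mat_norm_mult[of _ d d _ d]) auto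
    also have "\<dots> \<le> (C * \<theta> ^ length r) * (D * (C ^ (j + 1) * (D / \<theta>) ^ j * \<theta> ^ length w''))"
    proof (intro mult_mono)
      show "mat_norm (prodw d r) \<le> C * \<theta> ^ length r" by (rule Rb[OF rprod])
      show "mat_norm (M * prodw d w'') \<le> D * (C ^ (j + 1) * (D / \<theta>) ^ j * \<theta> ^ length w'')"
        using mat_norm_mult[OF Mc prodw_carrier[OF w''c]] DA[OF MA] IH
        by (meson mult_mono mat_norm_nonneg D order_trans)
    qed (use C th D mat_norm_nonneg in auto)
    also have "\<dots> = C ^ (Suc j + 1) * (D / \<theta>) ^ Suc j * \<theta> ^ length w"
      unfolding w using th by (simp add: power_add field_simps)
    finally show ?thesis unfolding fj .
  qed
qed

lemma bound_distinct:
  assumes A: "A \<subseteq> carrier_mat d d" "finite A" and RA: "R \<subseteq> A" and th: "\<theta> > 0" and C: "C \<ge> 1" and D: "D \<ge> 0"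
    and DA: "\<And>M. M \<in> A \<Longrightarrow> mat_norm M \<le> D"
    and Rb: "\<And>m Q. Q \<in> products d R m \<Longrightarrow> mat_norm Q \<le> C * \<theta> ^ m"
    and w: "set w \<subseteq> A" and dist: "distinct (filter (\<lambda>M. M \<notin> R) w)"
  shows "mat_norm (prodw d w) \<le> (C ^ (card (A - R) + 1) * (max 1 (D / \<theta>)) ^ card (A - R)) * \<theta> ^ length w"
proof -
  define j where "j = length (filter (\<lambda>M. M \<notin> R) w)"
  have "j = card (set (filter (\<lambda>M. M \<notin> R) w))" unfolding j_def by (simp only: distinct_card[OF dist])
  also have "\<dots> \<le> card (A - R)" using w A(2) by (intro card_mono) auto
  finally have js: "j \<le> card (A - R)" .
  have "mat_norm (prodw d w) \<le> C ^ (j + 1) * (D / \<theta>) ^ j * \<theta> ^ length w"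
    unfolding j_def by (rule seg_bound[OF A(1) RA th C D DA Rb w])
  also have "\<dots> \<le> (C ^ (card (A - R) + 1) * (max 1 (D / \<theta>)) ^ card (A - R)) * \<theta> ^ length w"
  proof (intro mult_right_mono mult_mono)
    show "C ^ (j + 1) \<le> C ^ (card (A - R) + 1)" using C js by (intro power_increasing) auto
    have "(D / \<theta>) ^ j \<le> (max 1 (D / \<theta>)) ^ j" using D th by (intro power_mono) auto
    also have "\<dots> \<le> (max 1 (D / \<theta>)) ^ card (A - R)" using js by (intro power_increasing) auto
    finally show "(D / \<theta>) ^ j \<le> (max 1 (D / \<theta>)) ^ card (A - R)" .
  qed (use C D th in auto)
  finally show ?thesis .
qed

lemma rank_lt2_scalar:
  fixes a Z :: "complex mat"
  assumes a: "a \<in> carrier_mat d d" and r: "vec_space.rank d a < 2" and Z: "Z \<in> carrier_mat d d"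
    and d: "d > 0"
  shows "\<exists>c. a * Z * a = c \<cdot>\<^sub>m a \<and> cmod c \<le> spectral_radius (a * Z)"
proof (cases "a = 0\<^sub>m d d")
  case True
  have "a * Z * a = 0 \<cdot>\<^sub>m a" using True Z by auto
  moreover have "cmod 0 \<le> spectral_radius (a * Z)" using sr_nonneg[of "a * Z" d] a Z d by simp
  ultimately show ?thesis by blast
next
  case False
  obtain u g where ug: "u \<in> carrier_vec d" "u \<noteq> 0\<^sub>v d" "\<forall>i<d. \<forall>j<d. a $$ (i,j) = u $ i * g j"
    using rank_lt2_struct[OF a r False] by blast
  note s = rank1_sandwich[OF ug(1) ug(3) a Z]
  have "cmod (\<Sum>l<d. (\<Sum>k<d. g k * Z $$ (k,l)) * u $ l) \<le> spectral_radius (a * Z)"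
    by (rule eigen_le_sr[OF _ d ug(1) ug(2) s(2)]) (use a Z in simp)
  thus ?thesis using s(1) by blast
qed

lemma no_fp_strict:
  assumes A: "finite A" "A \<noteq> {}" "A \<subseteq> carrier_mat d d" and d: "d > 0"
    and noFP: "\<not> finiteness_property d A"
    and l: "l \<ge> 1" and P: "P \<in> products d A l"
  shows "spectral_radius P powr (1 / real l) < jsr d A"
proof -
  let ?S = "(\<lambda>P. spectral_radius P powr (1 / real l)) ` products d A l"
  have le: "x \<le> jsr d A" if "x \<in> ?S" for x using that sr_le_jsr(1)[OF A d _ l] by auto
  have fin: "finite ?S" "?S \<noteq> {}" using A by (auto simp: finite_products products_nonempty)
  show ?thesis
  proof (rule ccontr)
    assume "\<not> ?thesis"
    hence eq: "spectral_radius P powr (1 / real l) = jsr d A" using le P by force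
    have "Max ?S = jsr d A"
    proof (rule antisym)
      show "Max ?S \<le> jsr d A" using fin le by simp
      show "jsr d A \<le> Max ?S" using fin P eq by (metis Max_ge image_eqI)
    qed
    hence "finiteness_property d A" unfolding finiteness_property_def using l by auto
    thus False using noFP by simp
  qed
qed

lemma main_false:
  assumes A: "finite A" "A \<noteq> {}" "A \<subseteq> carrier_mat d d" and d: "d > 0"
    and noFP: "\<not> finiteness_property d A"
    and R: "R = {M \<in> A. vec_space.rank d M \<ge> 2}"
    and th: "0 < \<theta>" "\<theta> < jsr d A" and C: "C \<ge> 1"
    and Rb: "\<And>m Q. Q \<in> products d R m \<Longrightarrow> mat_norm Q \<le> C * \<theta> ^ m"
  shows False
proof -
  define \<rho> where "\<rho> = jsr d A"
  have RA: "R \<subseteq> A" unfolding R by auto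
  define D where "D = (\<Sum>M\<in>A. mat_norm M)"
  have DA: "mat_norm M \<le> D" if "M \<in> A" for M
    unfolding D_def by (rule member_le_sum) (use that A mat_norm_nonneg in auto)
  have D0: "D \<ge> 0" unfolding D_def by (simp add: sum_nonneg mat_norm_nonneg)
  define K0 where "K0 = C ^ (card (A - R) + 1) * (max 1 (D / \<theta>)) ^ card (A - R)"
  have K0: "K0 \<ge> 1"
  proof -
    have a: "1 \<le> C ^ (card (A - R) + 1)" by (rule one_le_power) (use C in simp)
    have b: "1 \<le> (max 1 (D / \<theta>)) ^ card (A - R)" by (rule one_le_power) simp
    have c: "0 \<le> C ^ (card (A - R) + 1)" using a by linarith
    show ?thesis unfolding K0_def using mult_mono[OF a b c] by simp
  qed
  have bd: "mat_norm (prodw d w) \<le> K0 * \<theta> ^ length w"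
    if "set w \<subseteq> A" "distinct (filter (\<lambda>M. M \<notin> R) w)" for w
    unfolding K0_def
    by (rule bound_distinct[where A=A and R=R and d=d and \<theta>=\<theta> and C=C and D=D])
       (use A RA th C D0 DA Rb that in auto)
  define \<eta>1 where "\<eta>1 = (\<theta> + \<rho>) / 2"
  have \<eta>1: "\<theta> < \<eta>1" "\<eta>1 < \<rho>" using th unfolding \<eta>1_def \<rho>_def by auto
  define q where "q = \<theta> / \<eta>1"
  have q: "0 < q" "q < 1" unfolding q_def using \<eta>1 th by auto
  have "(\<lambda>l. q ^ l) \<longlonglongrightarrow> 0" using q by (intro LIMSEQ_power_zero) auto
  hence "eventually (\<lambda>l. q ^ l < 1 / K0) sequentially" using K0 by (intro order_tendstoD(2)) auto
  then obtain L0 where L0: "\<And>l. l \<ge> L0 \<Longrightarrow> q ^ l < 1 / K0" unfolding eventually_sequentially by auto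
  define T where "T = (\<Union>l\<in>{1..<L0}. (\<lambda>P. spectral_radius P powr (1 / real l)) ` products d A l)"
  have finT: "finite T" unfolding T_def using A by (auto simp: finite_products)
  have Tl: "x < \<rho>" if "x \<in> T" for x
    using that no_fp_strict[OF A d noFP] unfolding T_def \<rho>_def by auto
  define \<eta> where "\<eta> = Max (insert \<eta>1 T)"
  have \<eta>: "\<eta> < \<rho>" unfolding \<eta>_def using finT Tl \<eta>1 by simp
  have \<eta>ge: "\<eta>1 \<le> \<eta>" "\<And>x. x \<in> T \<Longrightarrow> x \<le> \<eta>" unfolding \<eta>_def using finT by auto
  have \<eta>pos: "\<eta> > 0" "\<theta> \<le> \<eta>" using \<eta>ge(1) \<eta>1 th by auto
  have srb: "spectral_radius P \<le> \<eta> ^ l"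
    if l: "l \<ge> 1" and P: "P \<in> products d A l" and Pn: "mat_norm P \<le> K0 * \<theta> ^ l" for l P
  proof -
    have Pc: "P \<in> carrier_mat d d" using products_carrier[OF A(3)] P by auto
    show ?thesis
    proof (cases "l \<ge> L0")
      case True
      have "spectral_radius P \<le> mat_norm P" by (rule sr_le_norm[OF Pc d])
      also have "\<dots> \<le> K0 * \<theta> ^ l" by (rule Pn)
      also have "\<dots> = K0 * q ^ l * \<eta>1 ^ l" unfolding q_def using \<eta>1 th
        by (simp add: power_divide)
      also have "\<dots> \<le> K0 * (1 / K0) * \<eta>1 ^ l"
        using L0[OF True] K0 \<eta>1 th by (intro mult_right_mono mult_left_mono) auto
      also have "\<dots> = \<eta>1 ^ l" using K0 by simp
      also have "\<dots> \<le> \<eta> ^ l" using \<eta>1 th \<eta>ge by (intro power_mono) auto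
      finally show ?thesis .
    next
      case False
      define x where "x = spectral_radius P powr (1 / real l)"
      have xT: "x \<in> T" unfolding T_def x_def using False l P by auto
      have "spectral_radius P = x ^ l" unfolding x_def using root_pow[OF sr_nonneg[OF Pc d], of l] l by simp
      also have "\<dots> \<le> \<eta> ^ l" using \<eta>ge(2)[OF xT] by (intro power_mono) (auto simp: x_def)
      finally show ?thesis .
    qed
  qed
  have W: "set w \<subseteq> A \<Longrightarrow> mat_norm (prodw d w) \<le> K0 * \<eta> ^ length w" for w
  proof (induction w rule: length_induct)
    case (1 w)
    show ?case
    proof (cases "distinct (filter (\<lambda>M. M \<notin> R) w)")
      case True
      have "mat_norm (prodw d w) \<le> K0 * \<theta> ^ length w" by (rule bd[OF 1(2) True])
      also have "\<dots> \<le> K0 * \<eta> ^ length w" using K0 th \<eta>pos by (intro mult_left_mono power_mono) auto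
      finally show ?thesis .
    next
      case False
      then obtain w1 a z w2 where split: "w = w1 @ a # z @ a # w2" and aR: "a \<notin> R"
        and dz: "distinct (filter (\<lambda>M. M \<notin> R) (a # z))"
        using dup_split by blast
      have aA: "a \<in> A" and zA: "set z \<subseteq> A" and w1A: "set w1 \<subseteq> A" and w2A: "set w2 \<subseteq> A"
        using 1(2) split by auto
      have ac: "a \<in> carrier_mat d d" using aA A by auto
      have zc: "set z \<subseteq> carrier_mat d d" and w1c: "set w1 \<subseteq> carrier_mat d d" and w2c: "set w2 \<subseteq> carrier_mat d d"
        using zA w1A w2A A by auto
      have ar: "vec_space.rank d a < 2" using aR aA unfolding R by auto
      define Z where "Z = prodw d z"
      have Zc: "Z \<in> carrier_mat d d" unfolding Z_def by (rule prodw_carrier[OF zc])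
      define l where "l = Suc (length z)"
      have aZ: "a * Z \<in> products d A l" unfolding products_words l_def Z_def using aA zA
        by (intro CollectI exI[of _ "a # z"]) auto
      have aZn: "mat_norm (a * Z) \<le> K0 * \<theta> ^ l"
        using bd[of "a # z"] aA zA dz unfolding Z_def l_def by simp
      have sraZ: "spectral_radius (a * Z) \<le> \<eta> ^ l" by (rule srb[OF _ aZ aZn]) (simp add: l_def)
      obtain c where c: "a * Z * a = c \<cdot>\<^sub>m a" "cmod c \<le> spectral_radius (a * Z)"
        using rank_lt2_scalar[OF ac ar Zc d] by blast
      define W2 where "W2 = prodw d w2"
      have W2c: "W2 \<in> carrier_mat d d" unfolding W2_def by (rule prodw_carrier[OF w2c])
      define W1 where "W1 = prodw d w1"
      have W1c: "W1 \<in> carrier_mat d d" unfolding W1_def by (rule prodw_carrier[OF w1c])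
      have "prodw d (a # z @ a # w2) = a * (Z * (a * W2))"
        unfolding Z_def W2_def using prodw_append[OF zc, of "a # w2"] ac w2c by simp
      also have "\<dots> = (a * Z * a) * W2"
        using ac Zc W2c by (simp add: assoc_mult_mat[of _ d d _ d _ d])
      also have "\<dots> = c \<cdot>\<^sub>m (a * W2)" unfolding c(1) using ac W2c by (rule mult_smult_assoc_mat)
      finally have e1: "prodw d (a # z @ a # w2) = c \<cdot>\<^sub>m (a * W2)" .
      have "prodw d w = W1 * (c \<cdot>\<^sub>m (a * W2))"
        unfolding split W1_def using prodw_append[OF w1c, of "a # z @ a # w2"] e1 ac zc w2c by simp
      also have "\<dots> = c \<cdot>\<^sub>m (W1 * (a * W2))" using W1c ac W2c by (intro mult_smult_distrib) auto
      also have "W1 * (a * W2) = prodw d (w1 @ a # w2)"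
        unfolding W1_def W2_def using prodw_append[OF w1c, of "a # w2"] ac w2c by simp
      finally have pw: "prodw d w = c \<cdot>\<^sub>m prodw d (w1 @ a # w2)" .
      have len: "length w = length (w1 @ a # w2) + l" unfolding split l_def by simp
      have IH: "mat_norm (prodw d (w1 @ a # w2)) \<le> K0 * \<eta> ^ length (w1 @ a # w2)"
      proof -
        have "length (w1 @ a # w2) < length w" using len unfolding l_def by simp
        moreover have "set (w1 @ a # w2) \<subseteq> A" using w1A aA w2A by auto
        ultimately show ?thesis using 1(1) by blast
      qed
      have "mat_norm (prodw d w) = cmod c * mat_norm (prodw d (w1 @ a # w2))"
        unfolding pw by (rule mat_norm_smult)
      also have "\<dots> \<le> \<eta> ^ l * (K0 * \<eta> ^ length (w1 @ a # w2))"
        using c(2) sraZ IH \<eta>pos by (intro mult_mono) (auto simp: mat_norm_nonneg)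
      also have "\<dots> = K0 * \<eta> ^ length w" unfolding len by (simp add: power_add mult_ac)
      finally show ?thesis .
    qed
  qed
  have snb: "sn d A n \<le> K0 * \<eta> ^ n" for n
  proof -
    obtain P where P: "P \<in> products d A n" "sn d A n = mat_norm P" using sn_attained[OF A(1,2)] by blast
    then obtain w where "P = prodw d w" "set w \<subseteq> A" "length w = n" unfolding products_words by auto
    thus ?thesis using P W by auto
  qed
  have lim: "(\<lambda>n. K0 powr (1 / real n) * \<eta>) \<longlonglongrightarrow> K0 powr 0 * \<eta>"
    by (intro tendsto_mult tendsto_const tendsto_powr lim_1_over_n) (use K0 in auto)
  have "\<rho> \<le> K0 powr 0 * \<eta>"
  proof (rule LIMSEQ_le_const[OF lim], intro exI[of _ 1] allI impI)
    fix n :: nat assume n: "n \<ge> 1"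
    have "\<rho> \<le> sn d A n powr (1 / real n)" unfolding \<rho>_def by (rule jsr_lim(2)[OF A n])
    also have "\<dots> \<le> (K0 * \<eta> ^ n) powr (1 / real n)"
      by (intro powr_mono2 snb) (auto simp: sn_nonneg[OF A(1,2)])
    also have "\<dots> = K0 powr (1 / real n) * \<eta>"
      using K0 \<eta>pos n by (simp add: powr_mult pow_root)
    finally show "\<rho> \<le> K0 powr (1 / real n) * \<eta>" .
  qed
  thus False using \<eta> K0 by simp
qed

lemma pow_left: assumes B: "(B :: complex mat) \<in> carrier_mat n n" shows "B * B ^\<^sub>m k = B ^\<^sub>m k * B"
proof (induction k)
  case 0 then show ?case using B by simp
next
  case (Suc k)
  have "B * B ^\<^sub>m Suc k = (B * B ^\<^sub>m k) * B"
    using B by (simp add: assoc_mult_mat[of _ n n _ n _ n])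
  also have "\<dots> = B ^\<^sub>m Suc k * B" using Suc by simp
  finally show ?case .
qed

lemma smult_smult_m: "(a :: complex) \<cdot>\<^sub>m (b \<cdot>\<^sub>m M) = (a * b) \<cdot>\<^sub>m M"
  by (rule eq_matI) auto

lemma pow_smult: assumes B: "(B :: complex mat) \<in> carrier_mat n n"
  shows "(c \<cdot>\<^sub>m B) ^\<^sub>m k = (c ^ k) \<cdot>\<^sub>m (B ^\<^sub>m k)"
proof (induction k)
  case 0 then show ?case using B by (auto intro!: eq_matI)
next
  case (Suc k)
  have "(c \<cdot>\<^sub>m B) ^\<^sub>m Suc k = ((c ^ k) \<cdot>\<^sub>m (B ^\<^sub>m k)) * (c \<cdot>\<^sub>m B)" using Suc by simp
  also have "\<dots> = (c ^ k) \<cdot>\<^sub>m ((B ^\<^sub>m k) * (c \<cdot>\<^sub>m B))"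
    using B by (intro mult_smult_assoc_mat[of _ n n _ n]) auto
  also have "(B ^\<^sub>m k) * (c \<cdot>\<^sub>m B) = c \<cdot>\<^sub>m (B ^\<^sub>m k * B)"
    using B by (intro mult_smult_distrib[of _ n n _ n]) auto
  finally show ?case by (simp add: smult_smult_m mult.commute)
qed

lemma smult_mv: assumes B: "B \<in> carrier_mat n n" and v: "v \<in> carrier_vec n"
  shows "(c \<cdot>\<^sub>m B) *\<^sub>v v = c \<cdot>\<^sub>v (B *\<^sub>v (v :: complex vec))"
proof (rule eq_vecI)
  fix i assume "i < dim_vec (c \<cdot>\<^sub>v (B *\<^sub>v v))"
  hence i: "i < n" using B by simp
  have "((c \<cdot>\<^sub>m B) *\<^sub>v v) $ i = (\<Sum>l<n. (c \<cdot>\<^sub>m B) $$ (i,l) * v $ l)"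
    by (rule mv_entry) (use B v i in auto)
  also have "\<dots> = c * (\<Sum>l<n. B $$ (i,l) * v $ l)"
    using B i by (simp add: sum_distrib_left mult.assoc)
  also have "(\<Sum>l<n. B $$ (i,l) * v $ l) = (B *\<^sub>v v) $ i" by (rule mv_entry[symmetric]) (use B v i in auto)
  finally show "((c \<cdot>\<^sub>m B) *\<^sub>v v) $ i = (c \<cdot>\<^sub>v (B *\<^sub>v v)) $ i" using B i by simp
qed (use B in simp)

lemma gelfand_bound:
  assumes B: "B \<in> carrier_mat d d" and d: "d > 0" and th: "spectral_radius B < \<theta>"
  shows "\<exists>C\<ge>1. \<forall>m. mat_norm (B ^\<^sub>m m) \<le> C * \<theta> ^ m"
proof -
  have th0: "\<theta> > 0" using sr_nonneg[OF B d] th by simp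
  define c :: complex where "c = of_real (1 / \<theta>)"
  have c0: "c \<noteq> 0" "cmod c = 1 / \<theta>" unfolding c_def norm_of_real using th0 by auto
  define B' where "B' = c \<cdot>\<^sub>m B"
  have B': "B' \<in> carrier_mat d d" unfolding B'_def using B by simp
  have sr': "spectral_radius B' < 1"
  proof -
    obtain l v where lv: "v \<in> carrier_vec d" "v \<noteq> 0\<^sub>v d" "B' *\<^sub>v v = l \<cdot>\<^sub>v v" "cmod l = spectral_radius B'"
      by (rule sr_eigen[OF B' d])
    have "B *\<^sub>v v = (l / c) \<cdot>\<^sub>v v"
    proof -
      have "c \<cdot>\<^sub>v (B *\<^sub>v v) = l \<cdot>\<^sub>v v" using lv(3) smult_mv[OF B lv(1)] unfolding B'_def by simp
      hence "(1 / c) \<cdot>\<^sub>v (c \<cdot>\<^sub>v (B *\<^sub>v v)) = (1 / c) \<cdot>\<^sub>v (l \<cdot>\<^sub>v v)" by simp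
      thus ?thesis using c0 by (simp add: smult_smult_assoc)
    qed
    hence "cmod (l / c) \<le> spectral_radius B" by (rule eigen_le_sr[OF B d lv(1,2)])
    hence "cmod l * \<theta> \<le> spectral_radius B" using c0 th0 by (simp add: norm_divide)
    hence "cmod l * \<theta> < \<theta>" using th by simp
    thus ?thesis using lv(4) th0 by simp
  qed
  obtain c0 where nb: "\<And>k. norm_bound (B' ^\<^sub>m k) c0"
    using spectral_radius_jnf_norm_bound_less_1_upper_triangular[OF B' sr'] by blast
  have c00: "c0 \<ge> 0" using nb[of 0] d B' unfolding norm_bound_def by (metis norm_ge_zero order_trans pow_mat_dim_square carrier_matD(1))
  define C where "C = max 1 (real d * c0)"
  show ?thesis
  proof (intro exI[of _ C] conjI allI)
    show "C \<ge> 1" unfolding C_def by simp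
    fix m
    have "mat_norm (B' ^\<^sub>m m) \<le> real d * c0" by (rule mat_norm_bound[OF pow_carrier_mat[OF B'] nb c00])
    also have "mat_norm (B' ^\<^sub>m m) = (1 / \<theta>) ^ m * mat_norm (B ^\<^sub>m m)"
      unfolding B'_def pow_smult[OF B] mat_norm_smult c0 norm_power by simp
    finally have "(1 / \<theta>) ^ m * mat_norm (B ^\<^sub>m m) \<le> C" unfolding C_def by linarith
    hence "\<theta> ^ m * ((1 / \<theta>) ^ m * mat_norm (B ^\<^sub>m m)) \<le> \<theta> ^ m * C" using th0 by (intro mult_left_mono) auto
    thus "mat_norm (B ^\<^sub>m m) \<le> C * \<theta> ^ m" using th0 by (simp add: power_one_over field_simps)
  qed
qed

lemma products_single: assumes B: "B \<in> carrier_mat d d"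
  shows "Q \<in> products d {B} m \<Longrightarrow> Q = B ^\<^sub>m m"
proof (induction m arbitrary: Q)
  case 0 then show ?case using B by simp
next
  case (Suc m)
  then obtain P where P: "Q = B * P" "P \<in> products d {B} m" by auto
  have "P = B ^\<^sub>m m" using Suc.IH P(2) by blast
  thus ?case using P(1) pow_left[OF B] by simp
qed

theorem corollary2:
  fixes d :: nat and A :: "complex mat set"
  assumes "d > 0" and "finite A" and "A \<noteq> {}" and "A \<subseteq> carrier_mat d d"
    and "\<not> finiteness_property d A"
  shows "card {M \<in> A. vec_space.rank d M \<ge> 2} \<ge> 2
       \<and> jsr d A = jsr d {M \<in> A. vec_space.rank d M \<ge> 2}
       \<and> \<not> finiteness_property d {M \<in> A. vec_space.rank d M \<ge> 2}"
proof -
  note d = assms(1)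
  have A: "finite A" "A \<noteq> {}" "A \<subseteq> carrier_mat d d" using assms(2-4) .
  note noFP = assms(5)
  define R where "R = {M \<in> A. vec_space.rank d M \<ge> 2}"
  define \<rho> where "\<rho> = jsr d A"
  have RA: "R \<subseteq> A" unfolding R_def by auto
  have finR: "finite R" using RA A(1) finite_subset by auto
  have \<rho>0: "\<rho> \<ge> 0" unfolding \<rho>_def by (rule jsr_lim(3)[OF A])
  have \<rho>pos: "\<rho> > 0"
  proof (rule ccontr)
    assume "\<not> \<rho> > 0"
    hence "\<rho> = 0" using \<rho>0 by simp
    obtain P where P: "P \<in> products d A 1" using products_nonempty[OF A(2)] by blast
    have "spectral_radius P powr (1 / real 1) < \<rho>" unfolding \<rho>_def
      by (rule no_fp_strict[OF A d noFP _ P]) simp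
    moreover have "spectral_radius P powr (1 / real 1) \<ge> 0" by simp
    ultimately show False using \<open>\<rho> = 0\<close> by simp
  qed
  note main = main_false[OF A d noFP R_def[unfolded \<rho>_def]]
  have Rne: "R \<noteq> {}"
  proof
    assume Re: "R = {}"
    show False
    proof (rule main)
      show "0 < \<rho> / 2" "\<rho> / 2 < jsr d A" using \<rho>pos unfolding \<rho>_def by auto
      show "1 \<le> max 1 (mat_norm (1\<^sub>m d))" by simp
      fix m Q assume Q: "Q \<in> products d R m"
      show "mat_norm Q \<le> max 1 (mat_norm (1\<^sub>m d)) * (\<rho> / 2) ^ m"
      proof (cases m)
        case 0 then show ?thesis using Q by simp
      next
        case (Suc k) then show ?thesis using Q Re by simp
      qed
    qed
  qed
  have Rns: "R \<noteq> {B}" for B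
  proof
    assume RB: "R = {B}"
    have BA: "B \<in> A" using RB RA by auto
    have Bc: "B \<in> carrier_mat d d" using BA A by auto
    have B1: "B * 1\<^sub>m d \<in> products d A 1" using BA by auto
    have "spectral_radius (B * 1\<^sub>m d) powr (1 / real 1) < \<rho>" unfolding \<rho>_def
      by (rule no_fp_strict[OF A d noFP _ B1]) simp
    hence srB: "spectral_radius B < \<rho>" using Bc by simp
    define \<theta> where "\<theta> = (spectral_radius B + \<rho>) / 2"
    have th: "spectral_radius B < \<theta>" "\<theta> < \<rho>" "0 < \<theta>"
      using srB sr_nonneg[OF Bc d] unfolding \<theta>_def by auto
    obtain C where C: "C \<ge> 1" "\<And>m. mat_norm (B ^\<^sub>m m) \<le> C * \<theta> ^ m"
      using gelfand_bound[OF Bc d th(1)] by blast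
    show False
    proof (rule main[OF th(3) th(2)[unfolded \<rho>_def] C(1)])
      fix m Q assume "Q \<in> products d R m"
      hence "Q = B ^\<^sub>m m" using products_single[OF Bc] RB by blast
      thus "mat_norm Q \<le> C * \<theta> ^ m" using C(2) by simp
    qed
  qed
  have card2: "card R \<ge> 2"
  proof -
    have "card R \<noteq> 0" using Rne finR by simp
    moreover have "card R \<noteq> 1" using Rns by (metis card_1_singletonE)
    ultimately show ?thesis by linarith
  qed
  have Rc: "R \<subseteq> carrier_mat d d" using RA A by auto
  note Rx = finR Rne Rc
  have jR: "jsr d R = \<rho>"
  proof (rule ccontr)
    assume ne: "jsr d R \<noteq> \<rho>"
    have "jsr d R \<le> \<rho>" unfolding \<rho>_def by (rule jsr_mono[OF RA Rne A(1,3)])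
    hence lt: "jsr d R < \<rho>" using ne by simp
    have jR0: "jsr d R \<ge> 0" by (rule jsr_lim(3)[OF Rx])
    define \<theta> where "\<theta> = (jsr d R + \<rho>) / 2"
    have th: "jsr d R < \<theta>" "\<theta> < \<rho>" "0 < \<theta>" using lt jR0 unfolding \<theta>_def by auto
    have "eventually (\<lambda>m. sn d R m powr (1 / real m) < \<theta>) sequentially"
      using jsr_lim(1)[OF Rx] th(1) by (rule order_tendstoD(2))
    then obtain M0 where M0: "\<And>m. m \<ge> M0 \<Longrightarrow> sn d R m powr (1 / real m) < \<theta>"
      unfolding eventually_sequentially by blast
    define M1 where "M1 = max M0 1"
    define C where "C = 1 + (\<Sum>m<M1. sn d R m / \<theta> ^ m)"
    have C1: "C \<ge> 1" unfolding C_def using th(3) by (simp add: sum_nonneg sn_nonneg[OF Rx(1,2)])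
    have snb: "sn d R m \<le> C * \<theta> ^ m" for m
    proof (cases "m < M1")
      case True
      have "sn d R m / \<theta> ^ m \<le> (\<Sum>m<M1. sn d R m / \<theta> ^ m)"
        by (rule member_le_sum) (use True th(3) sn_nonneg[OF Rx(1,2)] in auto)
      hence "sn d R m / \<theta> ^ m \<le> C" unfolding C_def by simp
      thus ?thesis using th(3) by (simp add: divide_le_eq mult.commute)
    next
      case False
      hence m: "m \<ge> M0" "m > 0" unfolding M1_def by auto
      have "sn d R m = (sn d R m powr (1 / real m)) ^ m"
        using root_pow[OF sn_nonneg[OF Rx(1,2)] m(2)] by simp
      also have "\<dots> \<le> \<theta> ^ m" using M0[OF m(1)] by (intro power_mono) auto
      also have "\<dots> \<le> C * \<theta> ^ m" using C1 th(3) by simp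
      finally show ?thesis .
    qed
    show False
    proof (rule main[OF th(3) th(2)[unfolded \<rho>_def] C1])
      fix m Q assume "Q \<in> products d R m"
      thus "mat_norm Q \<le> C * \<theta> ^ m" using sn_ge[OF finR] snb order_trans by blast
    qed
  qed
  have nFR: "\<not> finiteness_property d R"
  proof
    assume "finiteness_property d R"
    then obtain N where N: "N \<ge> 1" "jsr d R = Max ((\<lambda>P. spectral_radius P powr (1 / real N)) ` products d R N)"
      unfolding finiteness_property_def by blast
    have "Max ((\<lambda>P. spectral_radius P powr (1 / real N)) ` products d R N) \<in>
        (\<lambda>P. spectral_radius P powr (1 / real N)) ` products d R N"
      by (rule Max_in) (auto simp: finite_products[OF finR] products_nonempty[OF Rne])
    then obtain P where P: "P \<in> products d R N" "spectral_radius P powr (1 / real N) = \<rho>"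
      using N(2) jR by auto
    have "P \<in> products d A N" using products_mono[OF RA] P(1) by auto
    hence "spectral_radius P powr (1 / real N) < \<rho>" unfolding \<rho>_def
      by (rule no_fp_strict[OF A d noFP N(1)])
    thus False using P(2) by simp
  qed
  show ?thesis using card2 jR nFR unfolding R_def \<rho>_def by simp
qed

end
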